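(* Let $\mathcal X\subseteq\mathbb R^n$, $\bm c\in\mathbb R^n$, $\varepsilon\in(0,1)$, scenarios $\bm\xi^1,\dots,\bm\xi^N$ with probabilities $p_1,\dots,p_N\ge0$, $\sum_ip_i=1$, and $g(\bm x,\bm\xi)=\max_{j\in[J]}g_j(\bm x,\bm\xi)$. Consider $$v^*=\min_{\bm x\in\mathcal X}\Big\{\bm c^\top\bm x:\ \sum_{i=1}^N p_i\,\mathbb I[g(\bm x,\bm\xi^i)\le 0]\ge 1-\varepsilon\Big\},$$ let $\bm x^*$ be an optimal solution, $\bar I^*=\{i\in[N]: g(\bm x^*,\bm\xi^i)\le0\}$ and $\bar{\mathcal X}^*=\{\bm x\in\mathcal X: g(\bm x,\bm\xi^i)\le 0,\ i\in\bar I^*\}$. Suppose $\mathcal X$ is convex and $g(\cdot,\bm\xi^i)$ is convex for every $i\in\bar I^*$. If there exists $\bar I\subseteq\bar I^*$ such that (i) for each $i\in\bar I$ there exists $\bm x^i\in\bar{\mathcal X}^*$ with $g(\bm x^i,\bm\xi^i)<0$, and (ii) $\sum_{i\in\bar I}p_i>1-\varepsilon$, then $v^*=v^{\mathrm{CVaR}}_S$.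
   Context: $\mathbb I[\cdot]$ is the indicator function, $\bm e$ the all-ones vector. For $\bm\alpha\ge\bm e$, $v^{\mathrm{CVaR}}(\bm\alpha)=\min_{\bm x\in\mathcal X,\beta\le0,\bm s\ge\bm0}\{\bm c^\top\bm x:\ \varepsilon\beta+\sum_i p_is_i\le0,\ s_i+\beta\ge\alpha_i g(\bm x,\bm\xi^i),\ i\in[N]\}$ (value $+\infty$ if infeasible), and $v^{\mathrm{CVaR}}_S=\inf_{\bm\alpha\ge\bm e}v^{\mathrm{CVaR}}(\bm\alpha)$. *)

theory Defs
  imports "HOL-Analysis.Analysis"
begin

text \<open>Scenarios are indexed by [N] = {1..N}; decision vectors live in real^'n.
  Optimal values are taken as infima in the extended reals (Inf of the empty set is +infinity).\<close>

definition chance_feasible ::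
  "(real^'n) set \<Rightarrow> nat \<Rightarrow> (nat \<Rightarrow> real) \<Rightarrow> (nat \<Rightarrow> 'b) \<Rightarrow> (real^'n \<Rightarrow> 'b \<Rightarrow> real) \<Rightarrow> real \<Rightarrow> real^'n \<Rightarrow> bool"
  where "chance_feasible X N p \<xi> g \<epsilon> x \<longleftrightarrow>
    x \<in> X \<and> (\<Sum>i=1..N. p i * (if g x (\<xi> i) \<le> 0 then 1 else 0)) \<ge> 1 - \<epsilon>"

definition v_star ::
  "(real^'n) set \<Rightarrow> real^'n \<Rightarrow> nat \<Rightarrow> (nat \<Rightarrow> real) \<Rightarrow> (nat \<Rightarrow> 'b) \<Rightarrow> (real^'n \<Rightarrow> 'b \<Rightarrow> real) \<Rightarrow> real \<Rightarrow> ereal"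
  where "v_star X c N p \<xi> g \<epsilon> =
    Inf {ereal (c \<bullet> x) | x. chance_feasible X N p \<xi> g \<epsilon> x}"

definition v_CVaR ::
  "(real^'n) set \<Rightarrow> real^'n \<Rightarrow> nat \<Rightarrow> (nat \<Rightarrow> real) \<Rightarrow> (nat \<Rightarrow> 'b) \<Rightarrow> (real^'n \<Rightarrow> 'b \<Rightarrow> real) \<Rightarrow> real \<Rightarrow> (nat \<Rightarrow> real) \<Rightarrow> ereal"
  where "v_CVaR X c N p \<xi> g \<epsilon> \<alpha> =
    Inf {ereal (c \<bullet> x) | x \<beta> s. x \<in> X \<and> \<beta> \<le> 0 \<and> (\<forall>i\<in>{1..N}. s i \<ge> 0) \<and>
       \<epsilon> * \<beta> + (\<Sum>i=1..N. p i * s i) \<le> 0 \<and>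
       (\<forall>i\<in>{1..N}. s i + \<beta> \<ge> \<alpha> i * g x (\<xi> i))}"

definition v_CVaR_S ::
  "(real^'n) set \<Rightarrow> real^'n \<Rightarrow> nat \<Rightarrow> (nat \<Rightarrow> real) \<Rightarrow> (nat \<Rightarrow> 'b) \<Rightarrow> (real^'n \<Rightarrow> 'b \<Rightarrow> real) \<Rightarrow> real \<Rightarrow> ereal"
  where "v_CVaR_S X c N p \<xi> g \<epsilon> =
    (INF \<alpha>\<in>{\<alpha>. \<forall>i\<in>{1..N}. \<alpha> i \<ge> 1}. v_CVaR X c N p \<xi> g \<epsilon> \<alpha>)"

end

theory Submission
  imports Defs
begin


lemma cvar_imp_chance:
  fixes g :: "real^'n \<Rightarrow> 'b \<Rightarrow> real"
  assumes eps: "0 < \<epsilon>"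
    and p_nonneg: "\<forall>i\<in>{1..N}. p i \<ge> 0"
    and p_sum: "(\<Sum>i=1..N. p i) = 1"
    and x: "x \<in> X" and b: "\<beta> \<le> 0" and s: "\<forall>i\<in>{1..N}. s i \<ge> 0"
    and sum: "\<epsilon> * \<beta> + (\<Sum>i=1..N. p i * s i) \<le> 0"
    and con: "\<forall>i\<in>{1..N}. s i + \<beta> \<ge> \<alpha> i * g x (\<xi> i)"
    and al: "\<forall>i\<in>{1..N}. \<alpha> i \<ge> 1"
  shows "chance_feasible X N p \<xi> g \<epsilon> x"
proof -
  define q where "q i = (if g x (\<xi> i) \<le> 0 then 0 else 1::real)" for i
  have split: "(\<Sum>i=1..N. p i * (if g x (\<xi> i) \<le> 0 then 1 else 0)) = 1 - (\<Sum>i=1..N. p i * q i)"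
  proof -
    have "(\<Sum>i=1..N. p i * (if g x (\<xi> i) \<le> 0 then 1 else 0)) = (\<Sum>i=1..N. p i - p i * q i)"
      by (rule sum.cong) (auto simp: q_def)
    also have "\<dots> = 1 - (\<Sum>i=1..N. p i * q i)" by (simp only: sum_subtractf p_sum)
    finally show ?thesis .
  qed
  have key: "(\<Sum>i=1..N. p i * q i) \<le> \<epsilon>"
  proof (cases "\<beta> = 0")
    case True
    have ps0: "\<forall>i\<in>{1..N}. p i * s i = 0"
    proof -
      have h1: "(\<Sum>i=1..N. p i * s i) \<le> 0" using sum True by simp
      have h2: "\<forall>i\<in>{1..N}. 0 \<le> p i * s i" using p_nonneg s by auto
      have z: "(\<Sum>i=1..N. p i * s i) = 0" using h1 h2 by (meson antisym sum_nonneg)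
      show ?thesis using z h2 by (subst (asm) sum_nonneg_eq_0_iff) auto
    qed
    have "\<forall>i\<in>{1..N}. p i * q i = 0"
    proof
      fix i assume i: "i \<in> {1..N}"
      show "p i * q i = 0"
      proof (cases "g x (\<xi> i) \<le> 0")
        case True then show ?thesis by (simp add: q_def)
      next
        case False
        have a1: "\<alpha> i \<ge> 1" using al i by blast
        have "\<alpha> i * g x (\<xi> i) > 0" using a1 False by (intro mult_pos_pos) linarith+
        hence "s i > 0" using con i True by fastforce
        hence "p i = 0" using ps0 i by auto
        thus ?thesis by simp
      qed
    qed
    hence "(\<Sum>i=1..N. p i * q i) = 0" by (intro sum.neutral) blast
    thus ?thesis using eps by simp
  next
    case False
    hence bn: "\<beta> < 0" using b by simp
    have "\<forall>i\<in>{1..N}. p i * q i * (-\<beta>) \<le> p i * s i"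
    proof
      fix i assume i: "i \<in> {1..N}"
      show "p i * q i * (-\<beta>) \<le> p i * s i"
      proof (cases "g x (\<xi> i) \<le> 0")
        case True then show ?thesis using p_nonneg s i by (simp add: q_def)
      next
        case False
        have a1: "\<alpha> i \<ge> 1" using al i by blast
        have "\<alpha> i * g x (\<xi> i) > 0" using a1 False by (intro mult_pos_pos) linarith+
        hence "s i \<ge> -\<beta>" using con i by fastforce
        moreover have "p i \<ge> 0" using p_nonneg i by blast
        ultimately have "p i * (-\<beta>) \<le> p i * s i" by (rule mult_left_mono)
        thus ?thesis using False by (simp add: q_def)
      qed
    qed
    hence "(\<Sum>i=1..N. p i * q i * (-\<beta>)) \<le> (\<Sum>i=1..N. p i * s i)" by (intro sum_mono) blast
    moreover have "(\<Sum>i=1..N. p i * q i * (-\<beta>)) = (\<Sum>i=1..N. p i * q i) * (-\<beta>)"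
      by (simp only: sum_distrib_right)
    ultimately have "(\<Sum>i=1..N. p i * q i) * (-\<beta>) \<le> \<epsilon> * (-\<beta>)" using sum by linarith
    thus ?thesis using bn by simp
  qed
  show ?thesis unfolding chance_feasible_def using x split key by simp
qed



lemma strict_point_bound:
  fixes g :: "real^'n \<Rightarrow> 'b \<Rightarrow> real"
  assumes eps: "0 < \<epsilon>"
    and p_nonneg: "\<forall>i\<in>{1..N}. p i \<ge> 0"
    and p_sum: "(\<Sum>i=1..N. p i) = 1"
    and Isub: "I \<subseteq> {1..N}" and mass: "(\<Sum>i\<in>I. p i) > 1 - \<epsilon>"
    and y: "y \<in> X" and neg: "\<forall>i\<in>I. g y (\<xi> i) < 0"
  shows "v_CVaR_S X c N p \<xi> g \<epsilon> \<le> ereal (c \<bullet> y)"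
proof -
  define t where "t = 1 - (\<Sum>i\<in>I. p i)"
  define G where "G = (\<Sum>i=1..N. p i * \<bar>g y (\<xi> i)\<bar>)"
  define M where "M = (G + 1) / (\<epsilon> - t)"
  define \<beta> where "\<beta> = - M"
  define s where "s i = (if i \<in> I then 0 else max 0 (g y (\<xi> i) + M))" for i
  define \<alpha> where "\<alpha> i = (if i \<in> I then max 1 (M / (- g y (\<xi> i))) else 1)" for i
  have et: "\<epsilon> - t > 0" using mass by (simp add: t_def)
  have G0: "G \<ge> 0" unfolding G_def using p_nonneg by (intro sum_nonneg) auto
  have MG: "M * (\<epsilon> - t) = G + 1" using et by (simp add: M_def)
  have M0: "M > 0" using G0 et by (simp add: M_def)
  have b: "\<beta> \<le> 0" using M0 by (simp add: \<beta>_def)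
  have s0: "\<forall>i\<in>{1..N}. s i \<ge> 0" by (simp add: s_def)
  have al: "\<forall>i\<in>{1..N}. \<alpha> i \<ge> 1" by (simp add: \<alpha>_def)
  have con: "\<forall>i\<in>{1..N}. s i + \<beta> \<ge> \<alpha> i * g y (\<xi> i)"
  proof
    fix i assume i: "i \<in> {1..N}"
    show "s i + \<beta> \<ge> \<alpha> i * g y (\<xi> i)"
    proof (cases "i \<in> I")
      case True
      have gn: "g y (\<xi> i) < 0" using neg True by blast
      have "\<alpha> i \<ge> M / (- g y (\<xi> i))" using True by (simp add: \<alpha>_def)
      hence "\<alpha> i * g y (\<xi> i) \<le> M / (- g y (\<xi> i)) * g y (\<xi> i)"
        using gn by (intro mult_right_mono_neg) auto
      also have "\<dots> = - M" using gn by (simp add: field_simps)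
      finally show ?thesis using True by (simp add: s_def \<beta>_def)
    next
      case False
      then show ?thesis by (simp add: s_def \<alpha>_def \<beta>_def)
    qed
  qed
  have trm: "\<forall>i\<in>{1..N}. p i * s i \<le> p i * \<bar>g y (\<xi> i)\<bar> + M * (p i - (if i \<in> I then p i else 0))"
  proof
    fix i assume i: "i \<in> {1..N}"
    have pi: "p i \<ge> 0" using p_nonneg i by blast
    show "p i * s i \<le> p i * \<bar>g y (\<xi> i)\<bar> + M * (p i - (if i \<in> I then p i else 0))"
    proof (cases "i \<in> I")
      case True
      then show ?thesis using pi by (simp add: s_def)
    next
      case False
      have "s i \<le> \<bar>g y (\<xi> i)\<bar> + M" using M0 False by (simp add: s_def)
      hence "p i * s i \<le> p i * (\<bar>g y (\<xi> i)\<bar> + M)" using pi by (rule mult_left_mono)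
      then show ?thesis using False by (simp add: algebra_simps)
    qed
  qed
  have "(\<Sum>i=1..N. p i * s i) \<le> (\<Sum>i=1..N. p i * \<bar>g y (\<xi> i)\<bar> + M * (p i - (if i \<in> I then p i else 0)))"
    using trm by (intro sum_mono) blast
  also have "\<dots> = G + M * ((\<Sum>i=1..N. p i) - (\<Sum>i=1..N. (if i \<in> I then p i else 0)))"
    by (simp add: G_def sum.distrib sum_distrib_left[symmetric] sum_subtractf)
  also have "(\<Sum>i=1..N. (if i \<in> I then p i else 0)) = (\<Sum>i\<in>I. p i)"
  proof -
    have "(\<Sum>i=1..N. (if i \<in> I then p i else 0)) = (\<Sum>i\<in>{1..N} \<inter> I. p i)"
      by (simp add: sum.inter_restrict)
    also have "{1..N} \<inter> I = I" using Isub by blast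
    finally show ?thesis .
  qed
  finally have "(\<Sum>i=1..N. p i * s i) \<le> G + M * t" using p_sum by (simp add: t_def)
  hence sumc: "\<epsilon> * \<beta> + (\<Sum>i=1..N. p i * s i) \<le> 0" using MG by (simp add: \<beta>_def algebra_simps)
  have "v_CVaR X c N p \<xi> g \<epsilon> \<alpha> \<le> ereal (c \<bullet> y)"
    unfolding v_CVaR_def
    by (rule Inf_lower) (use y b s0 sumc con in blast)
  moreover have "v_CVaR_S X c N p \<xi> g \<epsilon> \<le> v_CVaR X c N p \<xi> g \<epsilon> \<alpha>"
    unfolding v_CVaR_S_def by (rule INF_lower) (use al in blast)
  ultimately show ?thesis by simp
qed



theorem theorem2:
  fixes X :: "(real^'n) set" and c :: "real^'n" and \<epsilon> :: real
    and N J :: nat and p :: "nat \<Rightarrow> real" and \<xi> :: "nat \<Rightarrow> 'b"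
    and gj :: "nat \<Rightarrow> real^'n \<Rightarrow> 'b \<Rightarrow> real" and g :: "real^'n \<Rightarrow> 'b \<Rightarrow> real"
    and xstar :: "real^'n" and Ibar :: "nat set"
  assumes eps: "0 < \<epsilon>" "\<epsilon> < 1"
    and p_nonneg: "\<forall>i\<in>{1..N}. p i \<ge> 0"
    and p_sum: "(\<Sum>i=1..N. p i) = 1"
    and J_pos: "J \<ge> 1"
    and g_def: "\<forall>x \<xi>'. g x \<xi>' = Max ((\<lambda>j. gj j x \<xi>') ` {1..J})"
    and xstar_feas: "chance_feasible X N p \<xi> g \<epsilon> xstar"
    and xstar_opt: "\<forall>x. chance_feasible X N p \<xi> g \<epsilon> x \<longrightarrow> c \<bullet> xstar \<le> c \<bullet> x"
    and X_convex: "convex X"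
    and g_convex: "\<forall>i\<in>{i\<in>{1..N}. g xstar (\<xi> i) \<le> 0}. convex_on UNIV (\<lambda>x. g x (\<xi> i))"
    and Ibar_sub: "Ibar \<subseteq> {i\<in>{1..N}. g xstar (\<xi> i) \<le> 0}"
    and slater: "\<forall>i\<in>Ibar. \<exists>xi. xi \<in> {x\<in>X. \<forall>k\<in>{i\<in>{1..N}. g xstar (\<xi> i) \<le> 0}. g x (\<xi> k) \<le> 0}
                                  \<and> g xi (\<xi> i) < 0"
    and Ibar_mass: "(\<Sum>i\<in>Ibar. p i) > 1 - \<epsilon>"
  shows "v_star X c N p \<xi> g \<epsilon> = v_CVaR_S X c N p \<xi> g \<epsilon>"
proof -
  define Is where "Is = {i\<in>{1..N}. g xstar (\<xi> i) \<le> 0}"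
  have xsX: "xstar \<in> X" using xstar_feas by (simp add: chance_feasible_def)
  have vstar: "v_star X c N p \<xi> g \<epsilon> = ereal (c \<bullet> xstar)"
    unfolding v_star_def
  proof (rule antisym)
    show "Inf {ereal (c \<bullet> x) |x. chance_feasible X N p \<xi> g \<epsilon> x} \<le> ereal (c \<bullet> xstar)"
      by (rule Inf_lower) (use xstar_feas in blast)
    show "ereal (c \<bullet> xstar) \<le> Inf {ereal (c \<bullet> x) |x. chance_feasible X N p \<xi> g \<epsilon> x}"
      by (rule Inf_greatest) (use xstar_opt in auto)
  qed
  have lower: "ereal (c \<bullet> xstar) \<le> v_CVaR_S X c N p \<xi> g \<epsilon>"
    unfolding v_CVaR_S_def
  proof (rule INF_greatest)
    fix \<alpha> :: "nat \<Rightarrow> real" assume al: "\<alpha> \<in> {\<alpha>. \<forall>i\<in>{1..N}. \<alpha> i \<ge> 1}"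
    show "ereal (c \<bullet> xstar) \<le> v_CVaR X c N p \<xi> g \<epsilon> \<alpha>"
      unfolding v_CVaR_def
    proof (rule Inf_greatest)
      fix z assume "z \<in> {ereal (c \<bullet> x) | x \<beta> s. x \<in> X \<and> \<beta> \<le> 0 \<and> (\<forall>i\<in>{1..N}. s i \<ge> 0) \<and>
       \<epsilon> * \<beta> + (\<Sum>i=1..N. p i * s i) \<le> 0 \<and>
       (\<forall>i\<in>{1..N}. s i + \<beta> \<ge> \<alpha> i * g x (\<xi> i))}"
      then obtain x \<beta> s where z: "z = ereal (c \<bullet> x)" and h: "x \<in> X" "\<beta> \<le> 0" "\<forall>i\<in>{1..N}. s i \<ge> 0"
        "\<epsilon> * \<beta> + (\<Sum>i=1..N. p i * s i) \<le> 0" "\<forall>i\<in>{1..N}. s i + \<beta> \<ge> \<alpha> i * g x (\<xi> i)"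
        by blast
      have "chance_feasible X N p \<xi> g \<epsilon> x"
        using al by (intro cvar_imp_chance[where \<alpha>=\<alpha> and g=g and \<xi>=\<xi> and x=x and X=X, OF eps(1) p_nonneg p_sum h]) blast
      thus "ereal (c \<bullet> xstar) \<le> z" using xstar_opt z by simp
    qed
  qed
  obtain xs where xs: "\<forall>i\<in>Ibar. xs i \<in> X \<and> (\<forall>k\<in>Is. g (xs i) (\<xi> k) \<le> 0) \<and> g (xs i) (\<xi> i) < 0"
  proof -
    have "\<forall>i\<in>Ibar. \<exists>xi. xi \<in> X \<and> (\<forall>k\<in>Is. g xi (\<xi> k) \<le> 0) \<and> g xi (\<xi> i) < 0"
      using slater unfolding Is_def by blast
    from bchoice[OF this] show ?thesis using that by blast
  qed
  have fin: "finite Ibar" by (rule finite_subset[OF Ibar_sub]) simp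
  have ne: "Ibar \<noteq> {}"
  proof
    assume "Ibar = {}"
    hence "(\<Sum>i\<in>Ibar. p i) = 0" by simp
    thus False using Ibar_mass eps(2) by linarith
  qed
  define w where "w = 1 / real (card Ibar)"
  have w0: "w > 0" using fin ne by (simp add: w_def card_gt_0_iff)
  have wsum: "(\<Sum>i\<in>Ibar. w) = 1" using fin ne by (simp add: w_def)
  define xbar where "xbar = (\<Sum>i\<in>Ibar. w *\<^sub>R xs i)"
  have xbarX: "xbar \<in> X" unfolding xbar_def
    by (rule convex_sum[OF fin X_convex wsum]) (use w0 xs in auto)
  have IbIs: "Ibar \<subseteq> Is" using Ibar_sub Is_def by simp
  have xbarneg: "g xbar (\<xi> i) < 0" if i: "i \<in> Ibar" for i
  proof -
    have iIs: "i \<in> Is" using i IbIs by blast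
    have cv: "convex_on UNIV (\<lambda>x. g x (\<xi> i))" using g_convex iIs Is_def by blast
    have "g xbar (\<xi> i) \<le> (\<Sum>k\<in>Ibar. w * g (xs k) (\<xi> i))"
      unfolding xbar_def using convex_on_sum[OF fin ne cv wsum, of xs] w0 by simp
    also have "\<dots> = w * g (xs i) (\<xi> i) + (\<Sum>k\<in>Ibar - {i}. w * g (xs k) (\<xi> i))"
      using fin i by (simp add: sum.remove)
    also have "(\<Sum>k\<in>Ibar - {i}. w * g (xs k) (\<xi> i)) \<le> 0"
    proof (rule sum_nonpos)
      fix k assume "k \<in> Ibar - {i}"
      hence "g (xs k) (\<xi> i) \<le> 0" using xs iIs by blast
      thus "w * g (xs k) (\<xi> i) \<le> 0" using w0 by (simp add: mult_nonneg_nonpos)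
    qed
    moreover have "w * g (xs i) (\<xi> i) < 0" using w0 xs i by (simp add: mult_pos_neg)
    ultimately show ?thesis by linarith
  qed
  define d where "d = c \<bullet> xbar - c \<bullet> xstar"
  have upper_l: "v_CVaR_S X c N p \<xi> g \<epsilon> \<le> ereal (c \<bullet> xstar + l * d)" if l: "0 < l" "l \<le> 1" for l
  proof -
    define y where "y = (1 - l) *\<^sub>R xstar + l *\<^sub>R xbar"
    have yX: "y \<in> X" unfolding y_def using convexD[OF X_convex xsX xbarX, of "1 - l" l] l by simp
    have yneg: "\<forall>i\<in>Ibar. g y (\<xi> i) < 0"
    proof
      fix i assume i: "i \<in> Ibar"
      have iIs: "i \<in> Is" using i IbIs by blast
      have cv: "convex_on UNIV (\<lambda>x. g x (\<xi> i))" using g_convex iIs Is_def by blast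
      have "g y (\<xi> i) \<le> (1 - l) * g xstar (\<xi> i) + l * g xbar (\<xi> i)"
        unfolding y_def using convex_onD[OF cv, of l xstar xbar] l by simp
      moreover have "(1 - l) * g xstar (\<xi> i) \<le> 0" using iIs l Is_def by (simp add: mult_nonneg_nonpos)
      moreover have "l * g xbar (\<xi> i) < 0" using xbarneg[OF i] l by (simp add: mult_pos_neg)
      ultimately show "g y (\<xi> i) < 0" by linarith
    qed
    have "v_CVaR_S X c N p \<xi> g \<epsilon> \<le> ereal (c \<bullet> y)"
      using strict_point_bound[where g=g and \<xi>=\<xi> and y=y and X=X and c=c, OF eps(1) p_nonneg p_sum _ Ibar_mass yX yneg] Ibar_sub by blast
    also have "c \<bullet> y = c \<bullet> xstar + l * d"
      by (simp add: y_def d_def inner_add_right algebra_simps)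
    finally show ?thesis .
  qed
  have upper: "v_CVaR_S X c N p \<xi> g \<epsilon> \<le> ereal (c \<bullet> xstar)"
  proof (rule ereal_le_epsilon2)
    fix e :: real assume e: "0 < e"
    define l where "l = min 1 (e / (\<bar>d\<bar> + 1))"
    have l0: "0 < l" "l \<le> 1" using e by (auto simp: l_def)
    have "l * d \<le> l * \<bar>d\<bar>" using l0 by (simp add: mult_left_mono)
    also have "\<dots> \<le> e / (\<bar>d\<bar> + 1) * \<bar>d\<bar>" by (rule mult_right_mono) (auto simp: l_def)
    also have "\<dots> \<le> e"
    proof -
      have "e * \<bar>d\<bar> \<le> e * (\<bar>d\<bar> + 1)" using e by simp
      thus ?thesis by (simp add: field_simps)
    qed
    finally have "l * d \<le> e" .
    hence "ereal (c \<bullet> xstar + l * d) \<le> ereal (c \<bullet> xstar) + ereal e" by simp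
    thus "v_CVaR_S X c N p \<xi> g \<epsilon> \<le> ereal (c \<bullet> xstar) + ereal e"
      using upper_l[OF l0] by (rule order_trans[rotated])
  qed
  show ?thesis using vstar lower upper by simp
qed

end
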